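(* Let $d\ge1$, $L>0$, $V\in\mathscr V_N$, and suppose that for some $\theta_d\in[0,\infty)$ there is $\rho\in\mathscr P$, not a.e. equal to $\rho_0$, with $\mathcal F_{\theta_d}(\rho)\le\mathcal F_{\theta_d}(\rho_0)$. Then for every $\theta>\theta_d$, $\rho_0$ is not a minimizer of $\mathcal F_\theta$ over $\mathscr P$.
   Context: $\mathbb T_L^d=\mathbb R^d/(L\mathbb Z)^d$. The class $\mathscr V$ consists of measurable $V:\mathbb R^d\to\mathbb R$ with $V\in L^1(\mathbb R^d)$, $V^-\in L^\infty$, $V(x)=V(-x)$, $V(x)=0$ for $|x|>a$, $0<a<L/2$; $V$ is periodized to $\mathbb T_L^d$ and $\hat V(k)=\int_{\mathbb T_L^d}V(x)e^{-ik\cdot x}dx$ for $k\in(2\pi/L)\mathbb Z^d$. $\mathscr V_N$ is the set of $V\in\mathscr V$ with $\hat V(k)<0$ for some $k\ne0$. $\mathscr P$ = probability densities on $\mathbb T_L^d$, $\rho_0\equiv L^{-d}$. $\mathcal F_\theta(\rho)=\int\rho\log\rho\,dx+\tfrac12\theta L^d\iint V(x-y)\rho(x)\rho(y)\,dx\,dy$ ($+\infty$ if $\rho\log\rho\notin L^1$). *)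

theory Defs
  imports "HOL-Analysis.Analysis"
begin

text \<open>Torus T_L^d represented by L-periodic functions on real^'n, integrated over the
  fundamental cube [0,L)^d. The dimension d is CARD('n) (always at least 1).\<close>

definition intvecs :: "(real^'n) set" where
  "intvecs = {k. \<forall>i. k $ i \<in> \<int>}"

definition cube :: "real \<Rightarrow> (real^'n) set" where
  "cube L = {x. \<forall>i. 0 \<le> x $ i \<and> x $ i < L}"

definition periodic_on_torus :: "real \<Rightarrow> (real^'n \<Rightarrow> real) \<Rightarrow> bool" where
  "periodic_on_torus L f \<longleftrightarrow> (\<forall>x. \<forall>k\<in>intvecs. f (x + L *\<^sub>R k) = f x)"

definition classV :: "real \<Rightarrow> (real^'n \<Rightarrow> real) \<Rightarrow> bool" where
  "classV L V \<longleftrightarrow>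
     V \<in> borel_measurable lborel \<and>
     integrable lborel V \<and>
     (\<exists>C. AE x in lborel. - C \<le> V x) \<and>
     (\<forall>x. V x = V (- x)) \<and>
     (\<exists>a. 0 < a \<and> a < L / 2 \<and> (\<forall>x. norm x > a \<longrightarrow> V x = 0))"

definition Vper :: "real \<Rightarrow> (real^'n \<Rightarrow> real) \<Rightarrow> real^'n \<Rightarrow> real" where
  "Vper L V x = infsum (\<lambda>k. V (x + L *\<^sub>R k)) intvecs"

definition Vhat :: "real \<Rightarrow> (real^'n \<Rightarrow> real) \<Rightarrow> real^'n \<Rightarrow> complex" where
  "Vhat L V k = (LINT x : cube L | lborel.
        complex_of_real (Vper L V x) * exp (- (\<i> * complex_of_real (k \<bullet> x))))"

definition dual_lattice :: "real \<Rightarrow> (real^'n) set" where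
  "dual_lattice L = (\<lambda>m. (2 * pi / L) *\<^sub>R m) ` intvecs"

definition classVN :: "real \<Rightarrow> (real^'n \<Rightarrow> real) \<Rightarrow> bool" where
  "classVN L V \<longleftrightarrow> classV L V \<and>
     (\<exists>k\<in>dual_lattice L. k \<noteq> 0 \<and> Vhat L V k \<in> \<real> \<and> Re (Vhat L V k) < 0)"

definition densities :: "real \<Rightarrow> (real^'n \<Rightarrow> real) set" where
  "densities L = {\<rho>. \<rho> \<in> borel_measurable lborel \<and> periodic_on_torus L \<rho> \<and>
      (\<forall>x. 0 \<le> \<rho> x) \<and> set_integrable lborel (cube L) \<rho> \<and>
      (LINT x : cube L | lborel. \<rho> x) = 1}"

definition rho0 :: "real \<Rightarrow> real^'n \<Rightarrow> real" where
  "rho0 L = (\<lambda>x. 1 / L ^ CARD('n))"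

definition xlogx :: "real \<Rightarrow> real" where
  "xlogx t = (if t = 0 then 0 else t * ln t)"

text \<open>Interaction energy iint V(x-y) rho(x) rho(y), as an extended real
  (positive part minus negative part; the negative part is finite for V in script-V).\<close>
definition interaction :: "real \<Rightarrow> (real^'n \<Rightarrow> real) \<Rightarrow> (real^'n \<Rightarrow> real) \<Rightarrow> ereal" where
  "interaction L V \<rho> =
     (enn2ereal (\<integral>\<^sup>+ z. indicator (cube L \<times> cube L) z *
        ennreal (max (Vper L V (fst z - snd z)) 0 * \<rho> (fst z) * \<rho> (snd z)) \<partial>(lborel \<Otimes>\<^sub>M lborel))
    - enn2ereal (\<integral>\<^sup>+ z. indicator (cube L \<times> cube L) z *
        ennreal (max (- Vper L V (fst z - snd z)) 0 * \<rho> (fst z) * \<rho> (snd z)) \<partial>(lborel \<Otimes>\<^sub>M lborel)))"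

definition free_energy :: "real \<Rightarrow> (real^'n \<Rightarrow> real) \<Rightarrow> real \<Rightarrow> (real^'n \<Rightarrow> real) \<Rightarrow> ereal" where
  "free_energy L V \<theta> \<rho> =
     (if set_integrable lborel (cube L) (\<lambda>x. xlogx (\<rho> x))
      then ereal (LINT x : cube L | lborel. xlogx (\<rho> x))
           + ereal (\<theta> * L ^ CARD('n) / 2) * interaction L V \<rho>
      else \<infinity>)"

end

theory Submission imports Defs begin

lemma xlog_ineq:
  fixes u c :: real assumes "c > 0" "u \<ge> 0"
  shows "xlogx u - xlogx c - (ln c + 1) * (u - c) \<ge> 0"
    and "xlogx u - xlogx c - (ln c + 1) * (u - c) = 0 \<Longrightarrow> u = c"
proof -
  have key: "xlogx u - xlogx c - (ln c + 1) * (u - c) > 0" if "u \<noteq> c"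
  proof (cases "u = 0")
    case True then show ?thesis using assms by (simp add: xlogx_def)
  next
    case False
    then have up: "u > 0" using assms by simp
    have ne: "ln (c/u) \<noteq> 0" using that up assms by (auto simp: field_simps)
    have "1 + ln (c/u) < exp (ln (c/u))"
      using exp_minus_greater[of "- ln (c/u)"] ne by simp
    then have lt: "1 + ln (c/u) < c/u" using up assms by simp
    have "ln (c/u) = ln c - ln u" using up assms by (simp add: ln_div)
    have "xlogx u - xlogx c - (ln c + 1) * (u - c) = u * (c/u - 1 - ln (c/u))"
      unfolding \<open>ln (c/u) = ln c - ln u\<close> using up assms False by (simp add: xlogx_def field_simps)
    also have "\<dots> > 0" using lt up by simp
    finally show ?thesis .
  qed
  show "xlogx u - xlogx c - (ln c + 1) * (u - c) \<ge> 0"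
    using key by (cases "u = c") force+
  show "xlogx u - xlogx c - (ln c + 1) * (u - c) = 0 \<Longrightarrow> u = c"
    using key by force
qed

lemma cube_sets[measurable]: "cube L \<in> sets (lborel :: (real^'n) measure)"
  unfolding cube_def by measurable

lemma cube_measure:
  assumes "L > 0"
  shows "emeasure lborel (cube L :: (real^'n) set) = ennreal (L ^ CARD('n))"
proof -
  let ?u = "(\<chi> i. L) :: real^'n"
  have sub1: "box 0 ?u \<subseteq> cube L" by (auto simp: cube_def mem_box_cart less_imp_le)
  have sub2: "cube L \<subseteq> cbox 0 ?u" unfolding cube_def mem_box_cart subset_iff by (auto intro: less_imp_le)
  have pr: "(\<Prod>b\<in>(Basis :: (real^'n) set). (?u - 0) \<bullet> b) = L ^ CARD('n)"
  proof -
    have "(\<Prod>b\<in>(Basis :: (real^'n) set). (?u - 0) \<bullet> b) = (\<Prod>b\<in>(Basis :: (real^'n) set). L)"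
      by (rule prod.cong) (auto simp: Basis_vec_def inner_axis)
    also have "\<dots> = L ^ CARD('n)" by simp
    finally show ?thesis .
  qed
  have nn: "\<forall>b\<in>(Basis :: (real^'n) set). 0 \<bullet> b \<le> ?u \<bullet> b"
    using assms by (auto simp: Basis_vec_def inner_axis)
  have e1: "emeasure lborel (box 0 ?u) = ennreal (L ^ CARD('n))"
    using assms pr nn by (simp add: emeasure_lborel_box_eq)
  have e2: "emeasure lborel (cbox 0 ?u) = ennreal (L ^ CARD('n))"
    using assms pr nn by (simp add: emeasure_lborel_cbox_eq)
  show ?thesis
      proof (rule order_antisym)
    show "emeasure lborel (cube L :: (real^'n) set) \<le> ennreal (L ^ CARD('n))"
      using emeasure_mono[OF sub2, of lborel] e2 by simp
    show "ennreal (L ^ CARD('n)) \<le> emeasure lborel (cube L :: (real^'n) set)"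
      using emeasure_mono[OF sub1, of lborel] e1 cube_sets[of L] by simp
  qed
qed

lemma cube_measure_real:
  assumes "L > 0"
  shows "measure lborel (cube L :: (real^'n) set) = L ^ CARD('n)"
  using cube_measure[OF assms] assms by (simp add: measure_def)

lemma entropy_strict:
  fixes \<rho> :: "real^'n \<Rightarrow> real"
  assumes L: "L > 0" and rho: "\<rho> \<in> densities L"
    and ne: "\<not> (AE x in lborel. x \<in> cube L \<longrightarrow> \<rho> x = rho0 L x)"
    and si: "set_integrable lborel (cube L) (\<lambda>x. xlogx (\<rho> x))"
  shows "(LINT x : cube L | lborel. xlogx (rho0 L (x::real^'n))) < (LINT x : cube L | lborel. xlogx (\<rho> x))"
proof -
  define c :: real where "c = 1 / L ^ CARD('n)"
  have cpos: "c > 0" using L by (simp add: c_def)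
  have r0: "rho0 L = (\<lambda>x::real^'n. c)" by (simp add: rho0_def c_def)
  have m: "measure lborel (cube L :: (real^'n) set) = L ^ CARD('n)" by (rule cube_measure_real[OF L])
  have cm: "c * L ^ CARD('n) = 1" using L by (simp add: c_def)
  have fin: "emeasure lborel (cube L :: (real^'n) set) < \<infinity>" using cube_measure[OF L, where 'n='n] by simp
  have rhoI: "integrable lborel (\<lambda>x. indicator (cube L) x * \<rho> x)"
    and rho1: "(\<integral>x. indicator (cube L) x * \<rho> x \<partial>lborel) = 1"
    and rnn: "\<And>x. 0 \<le> \<rho> x"
    using rho by (auto simp: densities_def set_integrable_def set_lebesgue_integral_def)
  have sI: "integrable lborel (\<lambda>x. indicator (cube L) x * xlogx (\<rho> x))"
    using si by (simp add: set_integrable_def)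
  have indI: "integrable lborel (indicator (cube L) :: real^'n \<Rightarrow> real)"
    using fin cube_sets[of L] by (intro integrable_real_indicator) auto
  define g where "g x = indicator (cube L) x * xlogx (\<rho> x) - xlogx c * indicator (cube L) x
      - (ln c + 1) * (indicator (cube L) x * \<rho> x - c * indicator (cube L) x)" for x
  have gI: "integrable lborel g" unfolding g_def
    using sI indI rhoI by (intro Bochner_Integration.integrable_diff integrable_mult_right) auto
  have g_eq: "g x = indicator (cube L) x * (xlogx (\<rho> x) - xlogx c - (ln c + 1) * (\<rho> x - c))" for x
    by (simp add: g_def indicator_def algebra_simps)
  have gnn: "0 \<le> g x" for x
    unfolding g_eq using xlog_ineq(1)[OF cpos rnn[of x]] by (simp add: indicator_def)
  have intg: "integral\<^sup>L lborel g = (\<integral>x. indicator (cube L) x * xlogx (\<rho> x) \<partial>lborel) - xlogx c * L ^ CARD('n)"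
    unfolding g_def using sI indI rhoI m cm rho1
    by (simp add: Bochner_Integration.integral_diff integrable_mult_right algebra_simps)
  have "integral\<^sup>L lborel g \<noteq> 0"
  proof
    assume "integral\<^sup>L lborel g = 0"
    then have "AE x in lborel. g x = 0"
      using integral_nonneg_eq_0_iff_AE[OF gI] gnn by simp
    then have "AE x in lborel. x \<in> cube L \<longrightarrow> \<rho> x = rho0 L x"
    proof (rule AE_mp, intro AE_I2 impI)
      fix x assume "g x = 0" "x \<in> cube L"
      then show "\<rho> x = rho0 L x"
        using xlog_ineq(2)[OF cpos rnn[of x]] unfolding g_eq r0 by simp
    qed
    with ne show False by simp
  qed
  then have "integral\<^sup>L lborel g > 0" using integral_nonneg_AE[of g lborel] gnn
    by (simp add: order_less_le)
  moreover have "(LINT x : cube L | lborel. xlogx (rho0 L (x::real^'n))) = xlogx c * L ^ CARD('n)"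
    unfolding r0 using set_integral_const[OF cube_sets[of L, where 'n='n], of "xlogx c"] fin m by (simp add: mult.commute)
  ultimately show ?thesis using intg unfolding set_lebesgue_integral_def real_scaleR_def by linarith
qed


definition Kset :: "(real^'n) set" where
  "Kset = {k \<in> intvecs. \<forall>i. \<bar>k $ i\<bar> \<le> 2}"

lemma finite_Kset: "finite (Kset :: (real^'n) set)"
proof -
  let ?S = "{-2, -1, 0, 1, 2 :: real}"
  have "Kset \<subseteq> (\<lambda>f. \<chi> i. f i) ` (PiE (UNIV :: 'n set) (\<lambda>_. ?S))"
  proof
    fix k :: "real^'n" assume k: "k \<in> Kset"
    have "k $ i \<in> ?S" for i
    proof -
      from k have "k $ i \<in> \<int>" "\<bar>k $ i\<bar> \<le> 2" by (auto simp: Kset_def intvecs_def)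
      then obtain m :: int where m: "k $ i = of_int m" "\<bar>of_int m :: real\<bar> \<le> 2" by (auto elim: Ints_cases)
      then have "\<bar>m\<bar> \<le> 2" by linarith
      then have "m \<in> {-2,-1,0,1,2}" by auto
      then show ?thesis using m by auto
    qed
    then have "(\<lambda>i. k $ i) \<in> PiE UNIV (\<lambda>_. ?S)" by auto
    moreover have "k = (\<chi> i. (\<lambda>i. k $ i) i)" by simp
    ultimately show "k \<in> (\<lambda>f. \<chi> i. f i) ` (PiE UNIV (\<lambda>_. ?S))" by blast
  qed
  moreover have "finite (PiE (UNIV :: 'n set) (\<lambda>_. ?S))" by (intro finite_PiE) auto
  ultimately show ?thesis by (meson finite_imageI finite_subset)
qed

lemma V_zero_outside_K:
  fixes V :: "real^'n \<Rightarrow> real" and z k :: "real^'n"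
  assumes L: "L > 0" and V: "classV L V" and z: "\<And>i. \<bar>z $ i\<bar> < L"
    and k: "k \<in> intvecs" "k \<notin> Kset"
  shows "V (z + L *\<^sub>R k) = 0"
proof -
  obtain a where a: "0 < a" "a < L / 2" "\<And>x. norm x > a \<Longrightarrow> V x = 0"
    using V unfolding classV_def by blast
  from k obtain i where i: "\<bar>k $ i\<bar> > 2" by (auto simp: Kset_def not_le)
  from k have "k $ i \<in> \<int>" by (auto simp: intvecs_def)
  then obtain m :: int where m: "k $ i = of_int m" by (auto elim: Ints_cases)
  with i have "\<bar>m\<bar> \<ge> 3" by linarith
  then have ki: "\<bar>k $ i\<bar> \<ge> 3" using m by linarith
  have "\<bar>L * k $ i\<bar> \<ge> 3 * L" using ki L by (simp add: abs_mult)
  then have "\<bar>(z + L *\<^sub>R k) $ i\<bar> > a" using z[of i] a by auto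
  then have "norm (z + L *\<^sub>R k) > a" using component_le_norm_cart[of "z + L *\<^sub>R k" i] by linarith
  then show ?thesis using a by blast
qed

lemma Vper_bound:
  fixes V :: "real^'n \<Rightarrow> real" and z :: "real^'n"
  assumes L: "L > 0" and V: "classV L V" and z: "\<And>i. \<bar>z $ i\<bar> < L"
  shows "\<bar>Vper L V z\<bar> \<le> (\<Sum>k\<in>Kset. \<bar>V (z + L *\<^sub>R k)\<bar>)"
proof -
  have "Vper L V z = infsum (\<lambda>k. V (z + L *\<^sub>R k)) Kset"
    unfolding Vper_def
    by (rule infsum_cong_neutral) (auto simp: Kset_def intro: V_zero_outside_K[OF L V z])
  also have "\<dots> = (\<Sum>k\<in>Kset. V (z + L *\<^sub>R k))" by (rule infsum_finite[OF finite_Kset])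
  finally show ?thesis by (simp add: sum_abs)
qed


lemma nn_integral_reflect:
  fixes f :: "real^'n \<Rightarrow> ennreal" and t :: "real^'n"
  assumes f[measurable]: "f \<in> borel_measurable borel"
  shows "(\<integral>\<^sup>+ y. f (t - y) \<partial>lborel) = (\<integral>\<^sup>+ y. f y \<partial>lborel)"
proof -
  have "lborel = density (distr lborel borel (\<lambda>x. t + (-1) *\<^sub>R x)) (\<lambda>_. \<bar>-1::real\<bar> ^ DIM(real^'n))"
    by (rule lborel_affine) simp
  then have eq: "(lborel :: (real^'n) measure) = distr lborel borel (\<lambda>x. t - x)"
    by (simp add: density_1)
  have "(\<integral>\<^sup>+ y. f y \<partial>lborel) = (\<integral>\<^sup>+ y. f y \<partial>(distr lborel borel (\<lambda>x. t - x)))"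
    by (subst eq) (rule refl)
  also have "\<dots> = (\<integral>\<^sup>+ y. f (t - y) \<partial>lborel)"
    by (rule nn_integral_distr) auto
  finally show ?thesis by simp
qed

lemma term_finite:
  fixes V :: "real^'n \<Rightarrow> real" and w :: "real^'n"
  assumes L: "L > 0" and V: "classV L V"
  shows "(\<integral>\<^sup>+ z. indicator (cube L \<times> cube L) z * ennreal \<bar>V (fst z - snd z + w)\<bar> \<partial>(lborel \<Otimes>\<^sub>M lborel)) < \<infinity>"
proof -
  have Vm[measurable]: "V \<in> borel_measurable borel"
    using V unfolding classV_def by (simp add: measurable_lborel1)
  have VI: "integrable lborel V" using V unfolding classV_def by simp
  define N where "N = (\<integral>\<^sup>+ y. ennreal \<bar>V y\<bar> \<partial>lborel)"
  have Nfin: "N < \<infinity>" using VI unfolding N_def integrable_iff_bounded by simp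
  have fm: "(\<lambda>z. indicator (cube L \<times> cube L) z * ennreal \<bar>V (fst z - snd z + w)\<bar>) \<in> borel_measurable (lborel \<Otimes>\<^sub>M lborel)"
    by measurable
  have "(\<integral>\<^sup>+ z. indicator (cube L \<times> cube L) z * ennreal \<bar>V (fst z - snd z + w)\<bar> \<partial>(lborel \<Otimes>\<^sub>M lborel))
      = (\<integral>\<^sup>+ x. \<integral>\<^sup>+ y. indicator (cube L \<times> cube L) (x, y) * ennreal \<bar>V (x - y + w)\<bar> \<partial>lborel \<partial>lborel)"
    using lborel.nn_integral_fst[OF fm] by simp
  also have "\<dots> \<le> (\<integral>\<^sup>+ x. indicator (cube L) (x::real^'n) * N \<partial>lborel)"
  proof (rule nn_integral_mono)
    fix x :: "real^'n"
    have "(\<integral>\<^sup>+ y. indicator (cube L \<times> cube L) (x, y) * ennreal \<bar>V (x - y + w)\<bar> \<partial>lborel)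
        \<le> (\<integral>\<^sup>+ y. indicator (cube L) x * ennreal \<bar>V ((x + w) - y)\<bar> \<partial>lborel)"
      by (rule nn_integral_mono) (auto simp: indicator_def algebra_simps)
    also have "\<dots> = indicator (cube L) x * (\<integral>\<^sup>+ y. ennreal \<bar>V ((x + w) - y)\<bar> \<partial>lborel)"
      by (rule nn_integral_cmult) measurable
    also have "(\<integral>\<^sup>+ y. ennreal \<bar>V ((x + w) - y)\<bar> \<partial>lborel) = N"
      unfolding N_def by (rule nn_integral_reflect[of "\<lambda>y. ennreal \<bar>V y\<bar>"]) measurable
    finally show "(\<integral>\<^sup>+ y. indicator (cube L \<times> cube L) (x, y) * ennreal \<bar>V (x - y + w)\<bar> \<partial>lborel)
        \<le> indicator (cube L) x * N" .
  qed
  also have "\<dots> = N * emeasure lborel (cube L :: (real^'n) set)"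
    using nn_integral_cmult_indicator[OF cube_sets[of L, where 'n='n], of N] by (simp add: mult.commute)
  also have "\<dots> < \<infinity>"
    using Nfin cube_measure[OF L, where 'n='n] by (simp add: ennreal_mult_less_top)
  finally show ?thesis .
qed


lemma part_finite:
  fixes V :: "real^'n \<Rightarrow> real" and h :: "real \<Rightarrow> real"
  assumes L: "L > 0" and V: "classV L V" and h: "\<And>t. 0 \<le> h t" "\<And>t. h t \<le> \<bar>t\<bar>"
  shows "(\<integral>\<^sup>+ z. indicator (cube L \<times> cube L) z *
        ennreal (h (Vper L V (fst z - snd z)) * rho0 L (fst z) * rho0 L (snd z)) \<partial>(lborel \<Otimes>\<^sub>M lborel)) < \<infinity>"
proof -
  define c :: real where "c = 1 / L ^ CARD('n)"
  have cpos: "c > 0" using L by (simp add: c_def)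
  have r0: "rho0 L = (\<lambda>x::real^'n. c)" by (simp add: rho0_def c_def)
  have Vm[measurable]: "V \<in> borel_measurable borel"
    using V unfolding classV_def by (simp add: measurable_lborel1)
  define T where "T k z = ennreal (c * c) * (indicator (cube L \<times> cube L) z * ennreal \<bar>V (fst z - snd z + L *\<^sub>R k)\<bar>)"
    for k :: "real^'n" and z :: "(real^'n) \<times> (real^'n)"
  have "(\<integral>\<^sup>+ z. indicator (cube L \<times> cube L) z *
        ennreal (h (Vper L V (fst z - snd z)) * rho0 L (fst z) * rho0 L (snd z)) \<partial>(lborel \<Otimes>\<^sub>M lborel))
      \<le> (\<integral>\<^sup>+ z. (\<Sum>k\<in>Kset. T k z) \<partial>(lborel \<Otimes>\<^sub>M lborel))"
  proof (rule nn_integral_mono)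
    fix z :: "(real^'n) \<times> (real^'n)"
    show "indicator (cube L \<times> cube L) z *
        ennreal (h (Vper L V (fst z - snd z)) * rho0 L (fst z) * rho0 L (snd z)) \<le> (\<Sum>k\<in>Kset. T k z)"
    proof (cases "z \<in> cube L \<times> cube L")
      case False then show ?thesis by simp
    next
      case True
      then have zc: "\<And>i. \<bar>(fst z - snd z) $ i\<bar> < L"
      proof -
        fix i
        obtain a b where z: "z = (a, b)" by (cases z)
        have "0 \<le> a $ i" "a $ i < L" "0 \<le> b $ i" "b $ i < L"
          using True z by (auto simp: cube_def)
        then show "\<bar>(fst z - snd z) $ i\<bar> < L" using z by (simp add: abs_less_iff)
      qed
      have hb: "h (Vper L V (fst z - snd z)) \<le> (\<Sum>k\<in>Kset. \<bar>V (fst z - snd z + L *\<^sub>R k)\<bar>)"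
        using h(2)[of "Vper L V (fst z - snd z)"] Vper_bound[OF L V zc] by linarith
      have "h (Vper L V (fst z - snd z)) * c * c \<le> (\<Sum>k\<in>Kset. c * c * \<bar>V (fst z - snd z + L *\<^sub>R k)\<bar>)"
      proof -
        have "h (Vper L V (fst z - snd z)) * c * c = (c * c) * h (Vper L V (fst z - snd z))" by simp
        also have "\<dots> \<le> (c * c) * (\<Sum>k\<in>Kset. \<bar>V (fst z - snd z + L *\<^sub>R k)\<bar>)"
          using cpos hb by (intro mult_left_mono) auto
        finally show ?thesis by (simp add: sum_distrib_left)
      qed
      then have "ennreal (h (Vper L V (fst z - snd z)) * c * c) \<le> ennreal (\<Sum>k\<in>Kset. c * c * \<bar>V (fst z - snd z + L *\<^sub>R k)\<bar>)"
        by (rule ennreal_leI)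
      also have "\<dots> = (\<Sum>k\<in>Kset. ennreal (c * c * \<bar>V (fst z - snd z + L *\<^sub>R k)\<bar>))"
        using cpos by (subst sum_ennreal) auto
      also have "\<dots> = (\<Sum>k\<in>Kset. T k z)"
        using True cpos by (intro sum.cong) (auto simp: T_def ennreal_mult)
      finally show ?thesis using True by (simp add: r0)
    qed
  qed
  also have "\<dots> = (\<Sum>k\<in>Kset. \<integral>\<^sup>+ z. T k z \<partial>(lborel \<Otimes>\<^sub>M lborel))"
    by (rule nn_integral_sum) (simp add: T_def)
  also have "\<dots> < \<infinity>"
  proof -
    have "(\<integral>\<^sup>+ z. T k z \<partial>(lborel \<Otimes>\<^sub>M lborel)) < \<infinity>" for k
    proof -
      have "(\<integral>\<^sup>+ z. T k z \<partial>(lborel \<Otimes>\<^sub>M lborel)) = ennreal (c * c) *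
          (\<integral>\<^sup>+ z. indicator (cube L \<times> cube L) z * ennreal \<bar>V (fst z - snd z + L *\<^sub>R k)\<bar> \<partial>(lborel \<Otimes>\<^sub>M lborel))"
        unfolding T_def by (rule nn_integral_cmult) measurable
      also have "\<dots> < \<infinity>"
        using term_finite[OF L V, of "L *\<^sub>R k"] by (simp add: ennreal_mult_less_top)
      finally show ?thesis .
    qed
    then show ?thesis using finite_Kset[where 'n='n] by simp
  qed
  finally show ?thesis .
qed


theorem proposition2p5:
  fixes V :: "real^'n \<Rightarrow> real" and L \<theta>d :: real
  assumes "L > 0"
    and "classVN L V"
    and "\<theta>d \<ge> 0"
    and "\<rho> \<in> densities L"
    and "\<not> (AE x in lborel. x \<in> cube L \<longrightarrow> \<rho> x = rho0 L x)"
    and "free_energy L V \<theta>d \<rho> \<le> free_energy L V \<theta>d (rho0 L)"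
  shows "\<forall>\<theta>>\<theta>d. \<not> (\<forall>\<sigma>\<in>densities L. free_energy L V \<theta> (rho0 L) \<le> free_energy L V \<theta> \<sigma>)"
proof (intro allI impI notI)
  fix \<theta> assume th: "\<theta> > \<theta>d" and all: "\<forall>\<sigma>\<in>densities L. free_energy L V \<theta> (rho0 L) \<le> free_energy L V \<theta> \<sigma>"
  note L = assms(1)
  have V: "classV L V" using assms(2) by (simp add: classVN_def)
  define c :: real where "c = 1 / L ^ CARD('n)"
  have r0: "rho0 L = (\<lambda>x::real^'n. c)" by (simp add: rho0_def c_def)
  have fin: "emeasure lborel (cube L :: (real^'n) set) < \<infinity>" using cube_measure[OF L, where 'n='n] by simp
  have si0: "set_integrable lborel (cube L) (\<lambda>x. xlogx (rho0 L (x::real^'n)))"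
    unfolding r0 set_integrable_def
    using fin cube_sets[of L, where 'n='n] by (simp add: real_scaleR_def)
  define S0 where "S0 = (LINT x : cube L | lborel. xlogx (rho0 L (x::real^'n)))"
  define P0 where "P0 = (\<integral>\<^sup>+ z. indicator (cube L \<times> cube L) z *
        ennreal (max (Vper L V (fst z - snd z)) 0 * rho0 L (fst z) * rho0 L (snd z)) \<partial>(lborel \<Otimes>\<^sub>M lborel))"
  define N0 where "N0 = (\<integral>\<^sup>+ z. indicator (cube L \<times> cube L) z *
        ennreal (max (- Vper L V (fst z - snd z)) 0 * rho0 L (fst z) * rho0 L (snd z)) \<partial>(lborel \<Otimes>\<^sub>M lborel))"
  have P0f: "P0 < \<infinity>" unfolding P0_def by (rule part_finite[OF L V, of "\<lambda>t. max t 0"]) auto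
  have N0f: "N0 < \<infinity>" unfolding N0_def by (rule part_finite[OF L V, of "\<lambda>t. max (-t) 0"]) auto
  obtain e0 where e0: "interaction L V (rho0 L) = ereal e0"
  proof -
    have "interaction L V (rho0 L) = enn2ereal P0 - enn2ereal N0"
      unfolding interaction_def P0_def N0_def by simp
    also have "\<dots> = ereal (enn2real P0 - enn2real N0)"
    proof -
      have "P0 = ennreal (enn2real P0)" "N0 = ennreal (enn2real N0)" using P0f N0f by simp_all
      then have "enn2ereal P0 = ereal (enn2real P0)" "enn2ereal N0 = ereal (enn2real N0)"
        by (metis enn2ereal_ennreal enn2real_nonneg)+
      then show ?thesis by simp
    qed
    finally show ?thesis using that by blast
  qed
  define a where "a t = t * L ^ CARD('n) / 2" for t :: real
  have Fr0: "free_energy L V t (rho0 L) = ereal (S0 + a t * e0)" for t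
    unfolding free_energy_def using si0 e0 by (simp add: S0_def a_def)
  have rho: "\<rho> \<in> densities L" by fact
  show False
  proof (cases "set_integrable lborel (cube L) (\<lambda>x. xlogx (\<rho> x))")
    case False
    then show False using assms(6) Fr0[of \<theta>d] by (simp add: free_energy_def)
  next
    case True
    define S where "S = (LINT x : cube L | lborel. xlogx (\<rho> x))"
    have SS: "S0 < S" unfolding S_def S0_def by (rule entropy_strict[OF L rho assms(5) True])
    have Fr: "free_energy L V t \<rho> = ereal S + ereal (a t) * interaction L V \<rho>" for t
      unfolding free_energy_def using True by (simp add: S_def a_def)
    have ath: "a \<theta> > a \<theta>d" "a \<theta>d \<ge> 0" using th assms(3) L by (auto simp: a_def divide_strict_right_mono)
    have less: "free_energy L V \<theta> \<rho> < free_energy L V \<theta> (rho0 L)"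
    proof (cases "interaction L V \<rho>")
      case (real r)
      have H: "S + a \<theta>d * r \<le> S0 + a \<theta>d * e0"
        using assms(6) unfolding Fr Fr0 real by simp
      then have "a \<theta>d * r < a \<theta>d * e0" using SS by linarith
      then have "r < e0" "a \<theta>d > 0" using ath(2) by (auto simp: mult_le_cancel_left not_less[symmetric] mult_less_cancel_left)
      then have "(a \<theta> - a \<theta>d) * r < (a \<theta> - a \<theta>d) * e0" using ath by simp
      then have "S + a \<theta> * r < S0 + a \<theta> * e0" using H by (simp add: algebra_simps)
      then show ?thesis unfolding Fr Fr0 real by simp
    next
      case PInf
      show ?thesis
      proof (cases "a \<theta>d = 0")
        case True
        then show ?thesis using assms(6) SS unfolding Fr Fr0 PInf by simp
      next
        case False
        then have "a \<theta>d > 0" using ath by simp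
        then show ?thesis using assms(6) unfolding Fr Fr0 PInf by simp
      qed
    next
      case MInf
      have "a \<theta> > 0" using ath by simp
      then show ?thesis unfolding Fr Fr0 MInf by simp
    qed
    then show False using all rho by (meson leD)
  qed
qed

end
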